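(* Let $F|R$ be an extension of ordered fields with canonical valuation $v$, and let $\tilde\iota:\mathcal C(R)\to\mathcal C(F)$ be any map constructed as follows: for a non-ball cut $C=(D,E)$ of $R$, $\tilde\iota(C)$ is one of $D^{+}_F$ or $E^{-}_F$; if $C$ is the lower edge $B_0^-$ (resp. upper edge $B_0^+$) in $R$ of a ball $B_0\neq R$ with ball complement $(D,E)$ in $R$, then $\tilde\iota(C)=D^{+}_F$ (resp. $E^{-}_F$); and $\tilde\iota((\emptyset,R))=R^{-}_F$, $\tilde\iota((R,\emptyset))=R^{+}_F$. If $vR$ is cofinal in $vF$, then $\tilde\iota$ sends principal cuts of $R$ to principal cuts of $F$. Otherwise, no principal cut of $R$ is sent to a principal cut of $F$.
   Context: The canonical valuation $v$ of an ordered field has as valuation ring the convex hull of $\mathbb Z$; $vR\subseteq vF$ are the value groups. For a totally ordered set $T$, a cut is a pair $(D,E)$ with $D<E$ and $D\cup E=T$; $\mathcal C(T)$ is the set of cuts. A cut is principal if $D$ has a last element or $E$ has a first element. For nonempty $A\subseteq T$, $A^+=(D,T\setminus D)$ with $D$ the smallest initial segment containing $A$, and $A^-=(T\setminus E,E)$ with $E$ the smallest final segment containing $A$; for $A\subseteq R$, $A^{\pm}_F$ denote these cuts taken in $F$. For an ordered field $K$, $a\in K$ and a final segment $S$ of $vK$ (possibly empty), $B_S(a,K)=\{b\in K\mid v(a-b)\in S\cup\{\infty\}\}$ is a ball. A ball complement of a ball $B$ is a pair $(D,E)$ with $D<B<E$ and $D\cup B\cup E=K$. A cut is a ball cut if it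 equals $B^+$ (upper edge) or $B^-$ (lower edge) of some ball $B$, otherwise it is a non-ball cut. *)

theory Defs
  imports Main
begin

text \<open>The ambient ordered field F is the type 'a; the subfield R is a subset of it.\<close>

definition is_subfield :: "'a::linordered_field set \<Rightarrow> bool" where
  "is_subfield R \<longleftrightarrow> 0 \<in> R \<and> 1 \<in> R \<and>
     (\<forall>x\<in>R. \<forall>y\<in>R. x + y \<in> R \<and> x * y \<in> R) \<and>
     (\<forall>x\<in>R. - x \<in> R) \<and> (\<forall>x\<in>R. x \<noteq> 0 \<longrightarrow> inverse x \<in> R)"

text \<open>Valuation ring of the canonical valuation: the convex hull of the integers.\<close>
definition cval_ring :: "'a::linordered_field set" where
  "cval_ring = {x. \<exists>m n::int. of_int m \<le> x \<and> x \<le> of_int n}"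

text \<open>Canonical valuation: v(x) is the coset of x modulo the units of the valuation ring
  (so the value group is F^x / O^x, and v(0) = {0} plays the role of \<infinity>).\<close>
definition cval :: "'a::linordered_field \<Rightarrow> 'a set" where
  "cval x = {x * u | u. u \<in> cval_ring \<and> u \<noteq> 0 \<and> inverse u \<in> cval_ring}"

text \<open>Value group vK of a subfield K (for K = UNIV this is vF).\<close>
definition value_set :: "'a::linordered_field set \<Rightarrow> 'a set set" where
  "value_set K = cval ` (K - {0})"

definition val_le :: "'a::linordered_field set \<Rightarrow> 'a set \<Rightarrow> bool" where
  "val_le g h \<longleftrightarrow> (\<exists>x\<in>g. \<exists>y\<in>h. x \<noteq> 0 \<and> y / x \<in> cval_ring)"

definition final_segment :: "'a::linordered_field set set \<Rightarrow> 'a set set \<Rightarrow> bool" where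
  "final_segment G S \<longleftrightarrow> S \<subseteq> G \<and> (\<forall>g\<in>S. \<forall>h\<in>G. val_le g h \<longrightarrow> h \<in> S)"

definition vball :: "'a::linordered_field set set \<Rightarrow> 'a \<Rightarrow> 'a set \<Rightarrow> 'a set" where
  "vball S a K = {b\<in>K. cval (a - b) \<in> S \<union> {cval 0}}"

definition is_ball :: "'a::linordered_field set \<Rightarrow> 'a set \<Rightarrow> bool" where
  "is_ball K B \<longleftrightarrow> (\<exists>a\<in>K. \<exists>S. final_segment (value_set K) S \<and> B = vball S a K)"

definition is_cut :: "'a::linorder set \<Rightarrow> 'a set \<times> 'a set \<Rightarrow> bool" where
  "is_cut T C \<longleftrightarrow> fst C \<union> snd C = T \<and> (\<forall>d\<in>fst C. \<forall>e\<in>snd C. d < e)"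

definition principal_cut :: "'a::linorder set \<times> 'a set \<Rightarrow> bool" where
  "principal_cut C \<longleftrightarrow> (\<exists>d\<in>fst C. \<forall>x\<in>fst C. x \<le> d) \<or> (\<exists>e\<in>snd C. \<forall>x\<in>snd C. e \<le> x)"

definition upper_cut :: "'a::linorder set \<Rightarrow> 'a set \<Rightarrow> 'a set \<times> 'a set" where
  "upper_cut T A = ({t\<in>T. \<exists>a\<in>A. t \<le> a}, T - {t\<in>T. \<exists>a\<in>A. t \<le> a})"

definition lower_cut :: "'a::linorder set \<Rightarrow> 'a set \<Rightarrow> 'a set \<times> 'a set" where
  "lower_cut T A = (T - {t\<in>T. \<exists>a\<in>A. a \<le> t}, {t\<in>T. \<exists>a\<in>A. a \<le> t})"

definition ball_cut :: "'a::linordered_field set \<Rightarrow> 'a set \<times> 'a set \<Rightarrow> bool" where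
  "ball_cut K C \<longleftrightarrow> (\<exists>B. is_ball K B \<and> (C = upper_cut K B \<or> C = lower_cut K B))"

definition ball_complement :: "'a::linordered_field set \<Rightarrow> 'a set \<Rightarrow> 'a set \<times> 'a set \<Rightarrow> bool" where
  "ball_complement K B C \<longleftrightarrow> (\<forall>d\<in>fst C. \<forall>b\<in>B. d < b) \<and> (\<forall>b\<in>B. \<forall>e\<in>snd C. b < e)
     \<and> fst C \<union> B \<union> snd C = K"

end

theory Submission
  imports Defs
begin

lemma one_cval_ring: "(1::'a::linordered_field) \<in> cval_ring"
  unfolding cval_ring_def by (rule CollectI, rule exI[of _ 1], rule exI[of _ 1]) simp

lemma self_cval: "(x::'a::linordered_field) \<in> cval x"
  unfolding cval_def using one_cval_ring by force

lemma cval_ring_bound: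
  assumes "(z::'a::linordered_field) \<in> cval_ring" shows "\<exists>n::nat. \<bar>z\<bar> \<le> of_nat n"
proof -
  obtain m n :: int where mn: "of_int m \<le> z" "z \<le> of_int n"
    using assms unfolding cval_ring_def by blast
  define k where "k = max \<bar>m\<bar> \<bar>n\<bar>"
  have "-k \<le> m" "n \<le> k" unfolding k_def by auto
  hence "(of_int (-k)::'a) \<le> of_int m" "(of_int n::'a) \<le> of_int k" by (simp_all only: of_int_le_iff)
  hence "- (of_int k::'a) \<le> of_int m" "(of_int n::'a) \<le> of_int k" by simp_all
  hence "- (of_int k::'a) \<le> z" "z \<le> of_int k" using mn by linarith+
  hence "\<bar>z\<bar> \<le> of_int (max \<bar>m\<bar> \<bar>n\<bar>)" unfolding k_def abs_le_iff by linarith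
  also have "\<dots> = of_nat (nat (max \<bar>m\<bar> \<bar>n\<bar>))" by simp
  finally show ?thesis by blast
qed

context
  fixes R :: "'a::linordered_field set"
  assumes sub: "is_subfield R"
begin

lemma R0: "0 \<in> R" and R1: "1 \<in> R" using sub unfolding is_subfield_def by auto
lemma Radd: "x \<in> R \<Longrightarrow> y \<in> R \<Longrightarrow> x + y \<in> R" using sub unfolding is_subfield_def by auto
lemma Rmult: "x \<in> R \<Longrightarrow> y \<in> R \<Longrightarrow> x * y \<in> R" using sub unfolding is_subfield_def by auto
lemma Rneg: "x \<in> R \<Longrightarrow> - x \<in> R" using sub unfolding is_subfield_def by auto
lemma Rinv: "x \<in> R \<Longrightarrow> inverse x \<in> R"
  using sub unfolding is_subfield_def by (cases "x = 0") auto
lemma Rdiff: "x \<in> R \<Longrightarrow> y \<in> R \<Longrightarrow> x - y \<in> R"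
  using Radd[of x "-y"] Rneg[of y] by simp
lemma Rabs: "x \<in> R \<Longrightarrow> \<bar>x\<bar> \<in> R"
  using Rneg by (cases "x \<ge> 0") auto
lemma Rnat: "of_nat n \<in> R"
  by (induction n) (auto simp: R0 R1 Radd)
lemma Rhalf: "x \<in> R \<Longrightarrow> x / 2 \<in> R"
proof -
  assume "x \<in> R"
  moreover have "inverse 2 \<in> R" using Rinv[OF Rnat[of 2]] by (simp only: of_nat_numeral)
  ultimately have "x * inverse 2 \<in> R" by (rule Rmult)
  thus ?thesis by (simp only: divide_inverse)
qed

definition "Qc \<longleftrightarrow> (\<forall>\<epsilon>::'a. \<epsilon> > 0 \<longrightarrow> (\<exists>\<delta>\<in>R. 0 < \<delta> \<and> \<delta> \<le> \<epsilon>))"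

lemma P_imp_Q:
  assumes P: "\<forall>g\<in>value_set (UNIV::'a set). \<exists>h\<in>value_set R. val_le g h"
  shows Qc
  unfolding Qc_def
proof (intro allI impI)
  fix \<epsilon> :: 'a assume e: "\<epsilon> > 0"
  have "cval \<epsilon> \<in> value_set UNIV" using e unfolding value_set_def by auto
  then obtain h where h: "h \<in> value_set R" "val_le (cval \<epsilon>) h" using P by blast
  then obtain y where y: "y \<in> R" "y \<noteq> 0" "h = cval y" unfolding value_set_def by auto
  then obtain x y' where xy: "x \<in> cval \<epsilon>" "y' \<in> cval y" "x \<noteq> 0" "y' / x \<in> cval_ring"
    using h unfolding val_le_def by blast
  obtain u where u: "x = \<epsilon> * u" "u \<in> cval_ring" "u \<noteq> 0" using xy(1) unfolding cval_def by blast
  obtain w where w: "y' = y * w" "w \<noteq> 0" "inverse w \<in> cval_ring" using xy(2) unfolding cval_def by blast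
  obtain n1 where n1: "\<bar>y'/x\<bar> \<le> of_nat n1" using cval_ring_bound[OF xy(4)] by blast
  obtain n2 where n2: "\<bar>u\<bar> \<le> of_nat n2" using cval_ring_bound[OF u(2)] by blast
  obtain n3 where n3: "\<bar>inverse w\<bar> \<le> of_nat n3" using cval_ring_bound[OF w(3)] by blast
  have "y = (y'/x) * \<epsilon> * u * inverse w" using u w xy(3) by (simp add: field_simps)
  hence "\<bar>y\<bar> = \<bar>y'/x\<bar> * \<epsilon> * \<bar>u\<bar> * \<bar>inverse w\<bar>" using e by (simp add: abs_mult)
  also have "\<dots> \<le> of_nat n1 * \<epsilon> * of_nat n2 * of_nat n3"
    using e n1 n2 n3 by (intro mult_mono) auto
  finally have le: "\<bar>y\<bar> \<le> of_nat (n1*n2*n3) * \<epsilon>" by (simp add: ac_simps)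
  define N where "N = n1*n2*n3"
  have Npos: "(of_nat N :: 'a) > 0"
  proof (rule ccontr)
    assume "\<not> (of_nat N :: 'a) > 0"
    hence "of_nat N = (0::'a)" by simp
    thus False using le y(2) unfolding N_def by auto
  qed
  define \<delta> where "\<delta> = \<bar>y\<bar> * inverse (of_nat N)"
  have d1: "\<delta> \<in> R" unfolding \<delta>_def using Rmult Rabs Rinv Rnat y(1) by blast
  have d2: "\<delta> > 0" unfolding \<delta>_def using y(2) Npos by simp
  have "\<bar>y\<bar> / of_nat N \<le> \<epsilon>" using le Npos unfolding N_def
    by (subst pos_divide_le_eq) (auto simp: mult.commute)
  have d3: "\<delta> \<le> \<epsilon>" unfolding \<delta>_def using \<open>\<bar>y\<bar> / of_nat N \<le> \<epsilon>\<close> by (simp add: divide_inverse)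
  from d1 d2 d3 show "\<exists>\<delta>\<in>R. 0 < \<delta> \<and> \<delta> \<le> \<epsilon>" by blast
qed

lemma Q_imp_P:
  assumes Qc
  shows "\<forall>g\<in>value_set (UNIV::'a set). \<exists>h\<in>value_set R. val_le g h"
proof
  fix g assume "g \<in> value_set (UNIV::'a set)"
  then obtain x where x: "x \<noteq> 0" "g = cval x" unfolding value_set_def by auto
  have xp: "\<bar>x\<bar> > 0" using x by simp
  obtain \<delta> where d: "\<delta> \<in> R" "0 < \<delta>" "\<delta> \<le> \<bar>x\<bar>" using assms xp unfolding Qc_def by blast
  have "cval \<delta> \<in> value_set R" using d unfolding value_set_def by auto
  moreover have "val_le g (cval \<delta>)" unfolding val_le_def
  proof (intro bexI conjI)
    have "\<bar>\<delta>/x\<bar> \<le> 1" using d x by (simp add: abs_div_pos)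
    hence "-1 \<le> \<delta>/x" "\<delta>/x \<le> 1" using abs_le_D1[of "\<delta>/x" 1] abs_le_D2[of "\<delta>/x" 1] by linarith+
    thus "\<delta>/x \<in> cval_ring" unfolding cval_ring_def
      by (intro CollectI exI[of _ "-1"] exI[of _ 1]) simp
  qed (use x self_cval in auto)
  ultimately show "\<exists>h\<in>value_set R. val_le g h" by blast
qed

lemma A_snd:
  assumes a: "a \<in> R"
  shows "\<not> (\<exists>m. (\<exists>e\<in>R. a < e \<and> e \<le> m) \<and> (\<forall>x. (\<exists>e\<in>R. a < e \<and> e \<le> x) \<longrightarrow> m \<le> x))"
proof
  assume "\<exists>m. (\<exists>e\<in>R. a < e \<and> e \<le> m) \<and> (\<forall>x. (\<exists>e\<in>R. a < e \<and> e \<le> x) \<longrightarrow> m \<le> x)"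
  then obtain m e where m: "e \<in> R" "a < e" "e \<le> m" "\<forall>x. (\<exists>e\<in>R. a < e \<and> e \<le> x) \<longrightarrow> m \<le> x" by blast
  define e' where "e' = (a + e) / 2"
  have "e' \<in> R" unfolding e'_def using Rhalf Radd a m(1) by blast
  moreover have "a < e'" "e' < e" using m(2) unfolding e'_def by (simp_all add: field_simps)
  ultimately have "m \<le> e'" using m(4) by blast
  thus False using \<open>e' < e\<close> m(3) by simp
qed

lemma B_fst:
  assumes a: "a \<in> R"
  shows "\<not> (\<exists>m. (\<exists>d\<in>R. d < a \<and> m \<le> d) \<and> (\<forall>x. (\<exists>d\<in>R. d < a \<and> x \<le> d) \<longrightarrow> x \<le> m))"
proof
  assume "\<exists>m. (\<exists>d\<in>R. d < a \<and> m \<le> d) \<and> (\<forall>x. (\<exists>d\<in>R. d < a \<and> x \<le> d) \<longrightarrow> x \<le> m)"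
  then obtain m e where m: "e \<in> R" "e < a" "m \<le> e" "\<forall>x. (\<exists>d\<in>R. d < a \<and> x \<le> d) \<longrightarrow> x \<le> m" by blast
  define e' where "e' = (a + e) / 2"
  have "e' \<in> R" unfolding e'_def using Rhalf Radd a m(1) by blast
  moreover have "e' < a" "e < e'" using m(2) unfolding e'_def by (simp_all add: field_simps)
  ultimately have "e' \<le> m" using m(4) by blast
  thus False using \<open>e < e'\<close> m(3) by simp
qed

lemma A_fst_Q:
  assumes a: "a \<in> R" and Q: "Qc"
  shows "\<forall>x. (\<forall>e\<in>R. a < e \<longrightarrow> x < e) \<longrightarrow> x \<le> a"
proof (intro allI impI)
  fix x assume x: "\<forall>e\<in>R. a < e \<longrightarrow> x < e"
  show "x \<le> a"
  proof (rule ccontr)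
    assume "\<not> x \<le> a"
    then obtain \<delta> where d: "\<delta> \<in> R" "0 < \<delta>" "\<delta> \<le> x - a" using Q unfolding Qc_def by force
    have "a + \<delta> \<in> R" using Radd a d(1) by blast
    thus False using x d by force
  qed
qed

lemma B_snd_Q:
  assumes a: "a \<in> R" and Q: "Qc"
  shows "\<forall>x. (\<forall>d\<in>R. d < a \<longrightarrow> d < x) \<longrightarrow> a \<le> x"
proof (intro allI impI)
  fix x assume x: "\<forall>d\<in>R. d < a \<longrightarrow> d < x"
  show "a \<le> x"
  proof (rule ccontr)
    assume "\<not> a \<le> x"
    then obtain \<delta> where d: "\<delta> \<in> R" "0 < \<delta>" "\<delta> \<le> a - x" using Q unfolding Qc_def by force
    have "a - \<delta> \<in> R" using Rdiff a d(1) by blast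
    thus False using x d by force
  qed
qed

lemma small_double:
  assumes nQ: "\<not> Qc" and e: "\<forall>d\<in>R. 0 < d \<longrightarrow> \<eta> < d"
  shows "\<exists>\<eta>'>\<eta>. \<forall>d\<in>R. 0 < d \<longrightarrow> \<eta>' < d"
proof -
  obtain \<epsilon> where eps: "\<epsilon> > 0" "\<forall>d\<in>R. 0 < d \<longrightarrow> \<epsilon> < d"
    using nQ unfolding Qc_def by force
  have "\<forall>d\<in>R. 0 < d \<longrightarrow> \<eta> + \<epsilon>/2 < d"
  proof (intro ballI impI)
    fix d assume d: "d \<in> R" "0 < d"
    have "d/2 \<in> R" using Rhalf d by blast
    hence "\<eta> < d/2" "\<epsilon> < d/2" using e eps d by auto
    thus "\<eta> + \<epsilon>/2 < d" using eps by simp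
  qed
  thus ?thesis using eps by (intro exI[of _ "\<eta> + \<epsilon>/2"]) auto
qed

lemma A_fst_nQ:
  assumes a: "a \<in> R" and nQ: "\<not> Qc"
  shows "\<not> (\<exists>m. (\<forall>e\<in>R. a < e \<longrightarrow> m < e) \<and> (\<forall>x. (\<forall>e\<in>R. a < e \<longrightarrow> x < e) \<longrightarrow> x \<le> m))"
proof
  assume "\<exists>m. (\<forall>e\<in>R. a < e \<longrightarrow> m < e) \<and> (\<forall>x. (\<forall>e\<in>R. a < e \<longrightarrow> x < e) \<longrightarrow> x \<le> m)"
  then obtain m where m: "\<forall>e\<in>R. a < e \<longrightarrow> m < e" "\<forall>x. (\<forall>e\<in>R. a < e \<longrightarrow> x < e) \<longrightarrow> x \<le> m" by blast
  have "a \<le> m" using m(2) by blast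
  have "\<forall>d\<in>R. 0 < d \<longrightarrow> m - a < d"
  proof (intro ballI impI)
    fix d assume "d \<in> R" "0 < d"
    hence "a + d \<in> R" "a < a + d" using Radd a by auto
    thus "m - a < d" using m(1) by force
  qed
  then obtain \<eta>' where h: "\<eta>' > m - a" "\<forall>d\<in>R. 0 < d \<longrightarrow> \<eta>' < d"
    using small_double[OF nQ] by blast
  have "\<forall>e\<in>R. a < e \<longrightarrow> a + \<eta>' < e"
  proof (intro ballI impI)
    fix e assume "e \<in> R" "a < e"
    hence "e - a \<in> R" "0 < e - a" using Rdiff a by auto
    thus "a + \<eta>' < e" using h(2) by force
  qed
  hence "a + \<eta>' \<le> m" using m(2) by blast
  thus False using h(1) by simp
qed

lemma B_snd_nQ:
  assumes a: "a \<in> R" and nQ: "\<not> Qc"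
  shows "\<not> (\<exists>m. (\<forall>d\<in>R. d < a \<longrightarrow> d < m) \<and> (\<forall>x. (\<forall>d\<in>R. d < a \<longrightarrow> d < x) \<longrightarrow> m \<le> x))"
proof
  assume "\<exists>m. (\<forall>d\<in>R. d < a \<longrightarrow> d < m) \<and> (\<forall>x. (\<forall>d\<in>R. d < a \<longrightarrow> d < x) \<longrightarrow> m \<le> x)"
  then obtain m where m: "\<forall>d\<in>R. d < a \<longrightarrow> d < m" "\<forall>x. (\<forall>d\<in>R. d < a \<longrightarrow> d < x) \<longrightarrow> m \<le> x" by blast
  have "m \<le> a" using m(2) by blast
  have "\<forall>d\<in>R. 0 < d \<longrightarrow> a - m < d"
  proof (intro ballI impI)
    fix d assume "d \<in> R" "0 < d"
    hence "a - d \<in> R" "a - d < a" using Rdiff a by auto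
    thus "a - m < d" using m(1) by force
  qed
  then obtain \<eta>' where h: "\<eta>' > a - m" "\<forall>d\<in>R. 0 < d \<longrightarrow> \<eta>' < d"
    using small_double[OF nQ] by blast
  have "\<forall>e\<in>R. e < a \<longrightarrow> e < a - \<eta>'"
  proof (intro ballI impI)
    fix e assume "e \<in> R" "e < a"
    hence "a - e \<in> R" "0 < a - e" using Rdiff a by auto
    thus "e < a - \<eta>'" using h(2) by force
  qed
  hence "m \<le> a - \<eta>'" using m(2) by blast
  thus False using h(1) by simp
qed

lemma A_principal:
  assumes a: "a \<in> R"
  shows "principal_cut (lower_cut UNIV {t\<in>R. t > a}) \<longleftrightarrow> Qc"
proof -
  have "principal_cut (lower_cut UNIV {t\<in>R. t > a}) \<longleftrightarrow>
     (\<exists>m. (\<forall>e\<in>R. a < e \<longrightarrow> m < e) \<and> (\<forall>x. (\<forall>e\<in>R. a < e \<longrightarrow> x < e) \<longrightarrow> x \<le> m)) \<or>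
     (\<exists>m. (\<exists>e\<in>R. a < e \<and> e \<le> m) \<and> (\<forall>x. (\<exists>e\<in>R. a < e \<and> e \<le> x) \<longrightarrow> m \<le> x))"
  proof -
    have f: "fst (lower_cut UNIV {t\<in>R. t > a}) = {x. \<forall>e\<in>R. a < e \<longrightarrow> x < e}"
      by (auto simp: lower_cut_def not_le)
    have s: "snd (lower_cut UNIV {t\<in>R. t > a}) = {x. \<exists>e\<in>R. a < e \<and> e \<le> x}"
      by (auto simp: lower_cut_def)
    show ?thesis unfolding principal_cut_def f s by (simp only: Bex_def Ball_def mem_Collect_eq)
  qed
  also have "\<dots> \<longleftrightarrow> Qc" (is "?L1 \<or> ?L2 \<longleftrightarrow> _")
  proof
    assume H: "?L1 \<or> ?L2"
    show Qc
    proof (rule ccontr)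
      assume nQ: "\<not> Qc"
      from H show False
      proof
        assume "?L1" thus False using A_fst_nQ[OF a nQ] by (rule notE[rotated])
      next
        assume "?L2" thus False using A_snd[OF a] by (rule notE[rotated])
      qed
    qed
  next
    assume Q: "Qc"
    have "?L1"
    proof (rule exI[of _ a], rule conjI)
      show "\<forall>e\<in>R. a < e \<longrightarrow> a < e" by simp
      show "\<forall>x. (\<forall>e\<in>R. a < e \<longrightarrow> x < e) \<longrightarrow> x \<le> a" by (rule A_fst_Q[OF a Q])
    qed
    thus "?L1 \<or> ?L2" by (rule disjI1)
  qed
  finally show ?thesis .
qed

lemma B_principal:
  assumes a: "a \<in> R"
  shows "principal_cut (upper_cut UNIV {t\<in>R. t < a}) \<longleftrightarrow> Qc"
proof -
  have "principal_cut (upper_cut UNIV {t\<in>R. t < a}) \<longleftrightarrow>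
     (\<exists>m. (\<exists>d\<in>R. d < a \<and> m \<le> d) \<and> (\<forall>x. (\<exists>d\<in>R. d < a \<and> x \<le> d) \<longrightarrow> x \<le> m)) \<or>
     (\<exists>m. (\<forall>d\<in>R. d < a \<longrightarrow> d < m) \<and> (\<forall>x. (\<forall>d\<in>R. d < a \<longrightarrow> d < x) \<longrightarrow> m \<le> x))"
  proof -
    have f: "fst (upper_cut UNIV {t\<in>R. t < a}) = {x. \<exists>d\<in>R. d < a \<and> x \<le> d}"
      by (auto simp: upper_cut_def)
    have s: "snd (upper_cut UNIV {t\<in>R. t < a}) = {x. \<forall>d\<in>R. d < a \<longrightarrow> d < x}"
      by (auto simp: upper_cut_def not_le)
    show ?thesis unfolding principal_cut_def f s by (simp only: Bex_def Ball_def mem_Collect_eq)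
  qed
  also have "\<dots> \<longleftrightarrow> Qc" (is "?L1 \<or> ?L2 \<longleftrightarrow> _")
  proof
    assume H: "?L1 \<or> ?L2"
    show Qc
    proof (rule ccontr)
      assume nQ: "\<not> Qc"
      from H show False
      proof
        assume "?L1" thus False using B_fst[OF a] by (rule notE[rotated])
      next
        assume "?L2" thus False using B_snd_nQ[OF a nQ] by (rule notE[rotated])
      qed
    qed
  next
    assume Q: "Qc"
    have "?L2"
    proof (rule exI[of _ a], rule conjI)
      show "\<forall>d\<in>R. d < a \<longrightarrow> d < a" by simp
      show "\<forall>x. (\<forall>d\<in>R. d < a \<longrightarrow> d < x) \<longrightarrow> a \<le> x" by (rule B_snd_Q[OF a Q])
    qed
    thus "?L1 \<or> ?L2" by (rule disjI2)
  qed
  finally show ?thesis .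
qed


lemma cval0: "cval (0::'a) = {0}"
  unfolding cval_def using one_cval_ring by force

lemma single_ball: "a \<in> R \<Longrightarrow> is_ball R {a}"
  unfolding is_ball_def
proof (intro bexI exI conjI)
  assume a: "a \<in> R"
  show "final_segment (value_set R) {}" unfolding final_segment_def by simp
  show "{a} = vball {} a R"
  proof -
    have e: "cval (a-b) = cval 0 \<longleftrightarrow> b = a" for b
    proof
      assume "cval (a-b) = cval 0"
      hence "a - b \<in> {0}" using self_cval[of "a-b"] cval0 by simp
      thus "b = a" by simp
    qed simp
    show ?thesis unfolding vball_def using a e by auto
  qed
qed

lemma single_ne: "{a} \<noteq> R"
proof
  assume "{a} = R"
  hence "0 = a" "1 = a" using R0 R1 by blast+
  thus False by simp
qed

lemma single_compl: "a \<in> R \<Longrightarrow> ball_complement R {a} ({t\<in>R. t < a}, {t\<in>R. t > a})"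
  unfolding ball_complement_def by auto

end

theorem proposition4p6:
  fixes R :: "'a::linordered_field set"
    and \<iota> :: "'a set \<times> 'a set \<Rightarrow> 'a set \<times> 'a set"
  assumes sub: "is_subfield R"
    and nonball: "\<And>D E. is_cut R (D, E) \<Longrightarrow> \<not> ball_cut R (D, E) \<Longrightarrow>
        \<iota> (D, E) = upper_cut UNIV D \<or> \<iota> (D, E) = lower_cut UNIV E"
    and ballc: "\<And>B0 D E. is_ball R B0 \<Longrightarrow> B0 \<noteq> R \<Longrightarrow> ball_complement R B0 (D, E) \<Longrightarrow>
        \<iota> (lower_cut R B0) = upper_cut UNIV D \<and> \<iota> (upper_cut R B0) = lower_cut UNIV E"
    and empty_left: "\<iota> ({}, R) = lower_cut UNIV R"
    and empty_right: "\<iota> (R, {}) = upper_cut UNIV R"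
  shows "((\<forall>g\<in>value_set (UNIV::'a set). \<exists>h\<in>value_set R. val_le g h) \<longrightarrow>
            (\<forall>C. is_cut R C \<and> principal_cut C \<longrightarrow> principal_cut (\<iota> C)))
       \<and> (\<not> (\<forall>g\<in>value_set (UNIV::'a set). \<exists>h\<in>value_set R. val_le g h) \<longrightarrow>
            (\<forall>C. is_cut R C \<and> principal_cut C \<longrightarrow> \<not> principal_cut (\<iota> C)))"
proof -
  have key: "principal_cut (\<iota> C) \<longleftrightarrow> Qc R" if C: "is_cut R C" "principal_cut C" for C
  proof -
    obtain D E where DE: "C = (D, E)" by (cases C)
    have cut: "D \<union> E = R" "\<forall>d\<in>D. \<forall>e\<in>E. d < e" using C(1) DE unfolding is_cut_def by auto
    have ib: "\<iota> (lower_cut R {a}) = upper_cut UNIV {t\<in>R. t < a} \<and>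
              \<iota> (upper_cut R {a}) = lower_cut UNIV {t\<in>R. t > a}" if a: "a \<in> R" for a
      by (rule ballc[of "{a}" "{t\<in>R. t < a}" "{t\<in>R. t > a}", OF single_ball[OF sub a] single_ne[OF sub] single_compl[OF sub a]])
    from C(2) DE have "(\<exists>d\<in>D. \<forall>x\<in>D. x \<le> d) \<or> (\<exists>e\<in>E. \<forall>x\<in>E. e \<le> x)"
      unfolding principal_cut_def by simp
    thus ?thesis
    proof
      assume "\<exists>d\<in>D. \<forall>x\<in>D. x \<le> d"
      then obtain a where a: "a \<in> D" "\<forall>x\<in>D. x \<le> a" by blast
      have aR: "a \<in> R" using a cut by blast
      have D1: "D = {t\<in>R. t \<le> a}"
      proof (intro set_eqI iffI)
        fix t assume "t \<in> D" thus "t \<in> {t\<in>R. t \<le> a}" using a cut(1) by blast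
      next
        fix t assume t: "t \<in> {t\<in>R. t \<le> a}"
        show "t \<in> D"
        proof (rule ccontr)
          assume "t \<notin> D" hence "t \<in> E" using t cut(1) by blast
          hence "a < t" using cut(2) a(1) by blast
          thus False using t by simp
        qed
      qed
      have E1: "E = R - {t\<in>R. t \<le> a}"
      proof (intro set_eqI iffI)
        fix t assume t: "t \<in> E"
        hence "a < t" using cut(2) a(1) by blast
        thus "t \<in> R - {t\<in>R. t \<le> a}" using t cut(1) by auto
      next
        fix t assume "t \<in> R - {t\<in>R. t \<le> a}"
        thus "t \<in> E" using D1 cut(1) by blast
      qed
      have "D = {t\<in>R. \<exists>x\<in>{a}. t \<le> x}" using D1 by simp
      moreover have "E = R - {t\<in>R. \<exists>x\<in>{a}. t \<le> x}" using E1 by simp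
      ultimately have "C = upper_cut R {a}" unfolding upper_cut_def DE by simp
      thus ?thesis using ib[OF aR] A_principal[OF sub aR] by simp
    next
      assume "\<exists>e\<in>E. \<forall>x\<in>E. e \<le> x"
      then obtain a where a: "a \<in> E" "\<forall>x\<in>E. a \<le> x" by blast
      have aR: "a \<in> R" using a cut by blast
      have E1: "E = {t\<in>R. a \<le> t}"
      proof (intro set_eqI iffI)
        fix t assume "t \<in> E" thus "t \<in> {t\<in>R. a \<le> t}" using a cut(1) by blast
      next
        fix t assume t: "t \<in> {t\<in>R. a \<le> t}"
        show "t \<in> E"
        proof (rule ccontr)
          assume "t \<notin> E" hence "t \<in> D" using t cut(1) by blast
          hence "t < a" using cut(2) a(1) by blast
          thus False using t by simp
        qed
      qed
      have D1: "D = R - {t\<in>R. a \<le> t}"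
      proof (intro set_eqI iffI)
        fix t assume t: "t \<in> D"
        hence "t < a" using cut(2) a(1) by blast
        thus "t \<in> R - {t\<in>R. a \<le> t}" using t cut(1) by auto
      next
        fix t assume "t \<in> R - {t\<in>R. a \<le> t}"
        thus "t \<in> D" using E1 cut(1) by blast
      qed
      have "E = {t\<in>R. \<exists>x\<in>{a}. x \<le> t}" using E1 by simp
      moreover have "D = R - {t\<in>R. \<exists>x\<in>{a}. x \<le> t}" using D1 by simp
      ultimately have "C = lower_cut R {a}" unfolding lower_cut_def DE by simp
      thus ?thesis using ib[OF aR] B_principal[OF sub aR] by simp
    qed
  qed
  show ?thesis
  proof (intro conjI impI allI)
    fix C assume P: "\<forall>g\<in>value_set (UNIV::'a set). \<exists>h\<in>value_set R. val_le g h"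
      and C: "is_cut R C \<and> principal_cut C"
    have "Qc R" by (rule P_imp_Q[OF sub P])
    thus "principal_cut (\<iota> C)" using key[OF conjunct1[OF C] conjunct2[OF C]] by simp
  next
    fix C assume nP: "\<not> (\<forall>g\<in>value_set (UNIV::'a set). \<exists>h\<in>value_set R. val_le g h)"
      and C: "is_cut R C \<and> principal_cut C"
    have "\<not> Qc R"
    proof
      assume "Qc R"
      hence "\<forall>g\<in>value_set (UNIV::'a set). \<exists>h\<in>value_set R. val_le g h" by (rule Q_imp_P[OF sub])
      with nP show False by (rule notE)
    qed
    thus "\<not> principal_cut (\<iota> C)" using key[OF conjunct1[OF C] conjunct2[OF C]] by simp
  qed
qed

end
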